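(* Let $q$ be a prime power. The nilpotent graph $\Gamma_{\mathfrak{N}}(\mathfrak{t}(2,\mathbb{F}_q))$ is $(q^2-q-1)$-regular.
   Context: $\mathfrak{t}(2,\mathbb{F}_q)$ is the Lie algebra of $2\times 2$ upper triangular matrices over $\mathbb{F}_q$ with bracket $[x,y]=xy-yx$. $\langle a,b\rangle$ denotes the Lie subalgebra generated by $a,b$, and $\mathrm{nil}(L)=\{x\in L\mid \langle h,x\rangle \text{ is nilpotent for all } h\in L\}$. For a finite-dimensional non-nilpotent Lie algebra $L$, the nilpotent graph $\Gamma_{\mathfrak{N}}(L)$ is the simple undirected graph with vertex set $L\setminus\mathrm{nil}(L)$ in which distinct vertices $x,y$ are adjacent iff $\langle x,y\rangle$ is nilpotent. A graph is $k$-regular if every vertex has degree $k$. *)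

theory Defs
  imports "HOL-Analysis.Analysis"
begin

type_synonym 'a mat2 = "'a^2^2"

text \<open>2x2 matrices over a field 'a are 'a mat2; product is (**).
  t(2,F) = upper triangular matrices, i.e. the (row 2, column 1) entry is zero; indices of type 2 are 0 (first) and 1 (second).\<close>

definition upper_tri :: "('a::field) mat2 set" where
  "upper_tri = {M. M $ 1 $ 0 = 0}"

definition lie_bracket :: "('a::field) mat2 \<Rightarrow> 'a mat2 \<Rightarrow> 'a mat2" where
  "lie_bracket x y = x ** y - y ** x"

definition msmult :: "'a::field \<Rightarrow> 'a mat2 \<Rightarrow> 'a mat2" where
  "msmult c M = (\<chi> i j. c * M $ i $ j)"

inductive_set lin_span :: "('a::field) mat2 set \<Rightarrow> 'a mat2 set" for X where
  span_zero: "0 \<in> lin_span X"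
| span_base: "x \<in> X \<Longrightarrow> x \<in> lin_span X"
| span_add: "x \<in> lin_span X \<Longrightarrow> y \<in> lin_span X \<Longrightarrow> x + y \<in> lin_span X"
| span_smult: "x \<in> lin_span X \<Longrightarrow> msmult c x \<in> lin_span X"

inductive_set lie_gen :: "('a::field) mat2 \<Rightarrow> 'a mat2 \<Rightarrow> 'a mat2 set" for a b where
  gen_a: "a \<in> lie_gen a b"
| gen_b: "b \<in> lie_gen a b"
| gen_zero: "0 \<in> lie_gen a b"
| gen_add: "x \<in> lie_gen a b \<Longrightarrow> y \<in> lie_gen a b \<Longrightarrow> x + y \<in> lie_gen a b"
| gen_smult: "x \<in> lie_gen a b \<Longrightarrow> msmult c x \<in> lie_gen a b"
| gen_bracket: "x \<in> lie_gen a b \<Longrightarrow> y \<in> lie_gen a b \<Longrightarrow> lie_bracket x y \<in> lie_gen a b"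

text \<open>Lower central series: L^1 = L, L^{k+1} = [L, L^k] (indexed from 0 here).\<close>
fun lcs :: "('a::field) mat2 set \<Rightarrow> nat \<Rightarrow> 'a mat2 set" where
  "lcs S 0 = S"
| "lcs S (Suc k) = lin_span {lie_bracket x y | x y. x \<in> S \<and> y \<in> lcs S k}"

definition lie_nilpotent :: "('a::field) mat2 set \<Rightarrow> bool" where
  "lie_nilpotent S \<longleftrightarrow> (\<exists>k. lcs S k = {0})"

definition nil_set :: "('a::field) mat2 set" where
  "nil_set = {x \<in> upper_tri. \<forall>h \<in> upper_tri. lie_nilpotent (lie_gen h x)}"

definition ng_vertices :: "('a::field) mat2 set" where
  "ng_vertices = upper_tri - nil_set"

definition ng_adj :: "('a::field) mat2 \<Rightarrow> 'a mat2 \<Rightarrow> bool" where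
  "ng_adj x y \<longleftrightarrow> x \<noteq> y \<and> lie_nilpotent (lie_gen x y)"

definition regular_graph :: "'v set \<Rightarrow> ('v \<Rightarrow> 'v \<Rightarrow> bool) \<Rightarrow> nat \<Rightarrow> bool" where
  "regular_graph V E k \<longleftrightarrow> (\<forall>x \<in> V. card {y \<in> V. E x y} = k)"

end

theory Submission
  imports Defs
begin

lemma t2: "(2::2) = 0" by simp
lemma U2: "UNIV = {0::2, 1}"
  using exhaust_2 t2 by auto
lemma ne01: "(0::2) \<noteq> 1" by simp

lemma mm_entry: "((A::'a::field^2^2) ** B) $ i $ j = A$i$0 * B$0$j + A$i$1*B$1$j"
  by (simp add: matrix_matrix_mult_def U2)

lemma mat_eq: "((A::'a::field mat2) = B) \<longleftrightarrow>
   (A$0$0 = B$0$0 \<and> A$0$1 = B$0$1 \<and> A$1$0 = B$1$0 \<and> A$1$1 = B$1$1)"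
proof -
  have f: "\<And>P. (\<forall>i::2. P i) \<longleftrightarrow> P 0 \<and> P 1" using U2 by (metis UNIV_I insertE singletonD)
  show ?thesis by (simp add: vec_eq_iff f)
qed

lemma mdist: "(A::'a::field mat2) ** (B + C) = A ** B + A ** C"
  "(B + C) ** A = B ** A + C ** A"
  "(A::'a::field mat2) ** (B - C) = A ** B - A ** C"
  "(B - C) ** A = B ** A - C ** A"
  by (simp_all add: mat_eq mm_entry algebra_simps)

definition tt :: "('a::field) mat2 \<Rightarrow> 'a" where "tt x = x$0$0 - x$1$1"
definition bb :: "('a::field) mat2 \<Rightarrow> 'a" where "bb x = x$0$1"

lemma br_zero:
  assumes "x \<in> upper_tri" "y \<in> upper_tri"
  shows "lie_bracket x y = 0 \<longleftrightarrow> tt x * bb y = tt y * bb x"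
  using assms unfolding upper_tri_def tt_def bb_def lie_bracket_def
  by (simp add: mat_eq mm_entry algebra_simps)

definition ccomm :: "('a::field) mat2 \<Rightarrow> 'a mat2 \<Rightarrow> bool" where
  "ccomm s z \<longleftrightarrow> z ** s = s ** z"

lemma msmult_mul: "msmult c A ** (B::'a::field mat2) = msmult c (A ** B)"
  "B ** msmult c A = msmult c (B ** A)"
  by (simp_all add: mat_eq mm_entry msmult_def algebra_simps)

lemma msmult_0: "msmult c (0::'a::field mat2) = 0"
  by (simp add: mat_eq msmult_def)

lemma ccomm_0: "ccomm s 0" by (simp add: ccomm_def)
lemma ccomm_add: "ccomm s z \<Longrightarrow> ccomm s w \<Longrightarrow> ccomm s (z + w)"
  by (simp add: ccomm_def mdist)
lemma ccomm_sm: "ccomm s z \<Longrightarrow> ccomm s (msmult c z)"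
  by (simp add: ccomm_def msmult_mul)
lemma ccomm_br: "ccomm s z \<Longrightarrow> ccomm s w \<Longrightarrow> ccomm s (lie_bracket z w)"
  unfolding ccomm_def lie_bracket_def
  by (simp add: mdist) (metis matrix_mul_assoc)

lemma L1:
  assumes "lie_bracket x y = (0::'a::field mat2)" "z \<in> lie_gen x y"
  shows "ccomm x z \<and> ccomm y z"
  using assms(2)
proof induction
  case gen_a then show ?case using assms(1) by (simp add: ccomm_def lie_bracket_def)
next
  case gen_b then show ?case using assms(1) by (simp add: ccomm_def lie_bracket_def)
qed (auto intro: ccomm_0 ccomm_add ccomm_sm ccomm_br)

lemma L2:
  assumes "lie_bracket x y = (0::'a::field mat2)" "z \<in> lie_gen x y"
  shows "\<forall>w \<in> lie_gen x y. ccomm w z"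
  using assms(2)
proof induction
  case gen_a then show ?case using L1[OF assms(1)] by (simp add: ccomm_def)
next
  case gen_b then show ?case using L1[OF assms(1)] by (simp add: ccomm_def)
qed (auto intro: ccomm_0 ccomm_add ccomm_sm ccomm_br)

lemma span0': "z \<in> lin_span X \<Longrightarrow> X \<subseteq> {0} \<Longrightarrow> z = (0::'a::field mat2)"
  by (induction rule: lin_span.induct) (auto simp: msmult_0)

lemma span0: "X \<subseteq> {0} \<Longrightarrow> lin_span X \<subseteq> {(0::'a::field mat2)}"
  using span0' by blast

lemma nilp_if:
  assumes "lie_bracket x y = (0::'a::field mat2)"
  shows "lie_nilpotent (lie_gen x y)"
proof -
  have "{lie_bracket u v | u v. u \<in> lie_gen x y \<and> v \<in> lcs (lie_gen x y) 0} \<subseteq> {0}"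
    using L2[OF assms] by (auto simp: ccomm_def lie_bracket_def)
  then have "lcs (lie_gen x y) 1 \<subseteq> {0}" using span0 by simp
  moreover have "0 \<in> lcs (lie_gen x y) 1" by (simp add: lin_span.span_zero)
  ultimately have "lcs (lie_gen x y) 1 = {0}" by blast
  then show ?thesis unfolding lie_nilpotent_def by blast
qed

lemma nilp_only:
  assumes xu: "x \<in> upper_tri" and yu: "y \<in> upper_tri"
    and ne: "lie_bracket x y \<noteq> (0::'a::field mat2)"
  shows "\<not> lie_nilpotent (lie_gen x y)"
proof -
  define S where "S = lie_gen x y"
  define c where "c = lie_bracket x y"
  define m where "m = c $ 0 $ 1"
  have cS: "c \<in> S" unfolding S_def c_def by (intro lie_gen.gen_bracket lie_gen.gen_a lie_gen.gen_b)
  have cm: "c $ 0 $ 0 = 0" "c $ 1 $ 0 = 0" "c $ 1 $ 1 = 0" "m = tt x * bb y - tt y * bb x"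
    using xu yu unfolding c_def m_def upper_tri_def lie_bracket_def tt_def bb_def
    by (simp_all add: mm_entry algebra_simps)
  have m0: "m \<noteq> 0" using ne cm unfolding c_def m_def by (auto simp: mat_eq)
  define E where "E = msmult (1/m) c"
  have ES: "E \<in> S" using cS unfolding E_def S_def by (rule lie_gen.gen_smult)
  have Ee: "E$0$0 = 0" "E$0$1 = 1" "E$1$0 = 0" "E$1$1 = 0"
    using cm m0 unfolding E_def msmult_def m_def by simp_all
  have En: "E \<noteq> 0" using Ee by (auto simp: mat_eq)
  obtain z where zS: "z \<in> S" and zu: "z \<in> upper_tri" and tz: "tt z \<noteq> 0"
  proof (cases "tt x = 0")
    case True
    then have "tt y \<noteq> 0" using m0 cm by auto
    then show ?thesis using that[of y] yu unfolding S_def by (auto intro: lie_gen.gen_b)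
  next
    case False
    then show ?thesis using that[of x] xu unfolding S_def by (auto intro: lie_gen.gen_a)
  qed
  have zE: "msmult (1 / tt z) (lie_bracket z E) = E"
    using zu Ee tz unfolding upper_tri_def lie_bracket_def tt_def msmult_def
    by (simp add: mat_eq mm_entry field_simps)
  have "E \<in> lcs S k" for k
  proof (induction k)
    case 0 then show ?case using ES by simp
  next
    case (Suc k)
    have "lie_bracket z E \<in> lcs S (Suc k)"
      using zS Suc by (auto intro!: lin_span.span_base)
    then have "msmult (1 / tt z) (lie_bracket z E) \<in> lcs S (Suc k)"
      unfolding lcs.simps by (rule lin_span.span_smult)
    then show ?case using zE by simp
  qed
  then show ?thesis using En unfolding lie_nilpotent_def S_def by blast
qed

lemma nilp_iff:
  assumes "x \<in> upper_tri" "y \<in> upper_tri"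
  shows "lie_nilpotent (lie_gen x y) \<longleftrightarrow> tt x * bb y = tt y * bb (x::'a::field mat2)"
  using nilp_if nilp_only br_zero[OF assms] assms by blast

definition mk :: "'a \<Rightarrow> 'a \<Rightarrow> 'a \<Rightarrow> ('a::field) mat2" where
  "mk a b d = (\<chi> i j. if i = 0 then (if j = 0 then a else b) else (if j = 0 then 0 else d))"

lemma mk_e[simp]: "mk a b d $ 0 $ 0 = a" "mk a b d $ 0 $ 1 = b" "mk a b d $ 1 $ 0 = 0" "mk a b d $ 1 $ 1 = d"
  by (simp_all add: mk_def)

lemma tb_mk[simp]: "tt (mk a b d) = a - d" "bb (mk a b d) = b"
  by (simp_all add: tt_def bb_def)

lemma mk_u: "mk a b d \<in> upper_tri" by (simp add: upper_tri_def)

lemma nil_char: "(x::'a::field mat2) \<in> nil_set \<longleftrightarrow> x \<in> upper_tri \<and> tt x = 0 \<and> bb x = 0"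
proof
  assume x: "x \<in> nil_set"
  then have xu: "x \<in> upper_tri" by (simp add: nil_set_def)
  have "lie_nilpotent (lie_gen (mk 1 0 0) x)" "lie_nilpotent (lie_gen (mk 0 1 0) x)"
    using x mk_u by (auto simp: nil_set_def)
  then show "x \<in> upper_tri \<and> tt x = 0 \<and> bb x = 0"
    using xu by (simp add: nilp_iff[OF mk_u xu])
next
  assume "x \<in> upper_tri \<and> tt x = 0 \<and> bb x = 0"
  then show "x \<in> nil_set" by (simp add: nil_set_def nilp_iff)
qed

lemma vert_char: "(x::'a::field mat2) \<in> ng_vertices \<longleftrightarrow> x \<in> upper_tri \<and> (tt x \<noteq> 0 \<or> bb x \<noteq> 0)"
  by (auto simp: ng_vertices_def nil_char)

lemma nbhd_card:
  assumes q: "CARD('a::{field,finite}) = q" and xv: "(x::'a mat2) \<in> ng_vertices"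
  shows "card {y \<in> ng_vertices. ng_adj x y} = q^2 - q - 1"
proof -
  have xu: "x \<in> upper_tri" and x0: "tt x \<noteq> 0 \<or> bb x \<noteq> 0" using xv by (auto simp: vert_char)
  define N where "N = {y \<in> upper_tri. (tt y \<noteq> 0 \<or> bb y \<noteq> 0) \<and> tt x * bb y = tt y * bb x}"
  have eq: "{y \<in> ng_vertices. ng_adj x y} = N - {x}"
    unfolding N_def ng_adj_def using xu by (auto simp: vert_char nilp_iff)
  define g where "g = (\<lambda>(l::'a, d::'a). mk (d + l * tt x) (l * bb x) d)"
  have inj: "inj_on g ((UNIV - {0}) \<times> UNIV)"
  proof (rule inj_onI)
    fix p p' assume "p \<in> (UNIV - {0}) \<times> UNIV" "p' \<in> (UNIV - {0}) \<times> UNIV" and e: "g p = g p'"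
    obtain l d l' d' where p: "p = (l, d)" "p' = (l', d')" by fastforce
    have "mk (d + l * tt x) (l * bb x) d = mk (d' + l' * tt x) (l' * bb x) d'"
      using e unfolding p g_def by simp
    then have "d = d'" "d + l * tt x = d' + l' * tt x" "l * bb x = l' * bb x"
      by (metis mk_e)+
    then have "l * tt x = l' * tt x" "l * bb x = l' * bb x" by simp_all
    then have "l = l'" using x0 by auto
    then show "p = p'" using \<open>d = d'\<close> p by simp
  qed
  have img: "g ` ((UNIV - {0}) \<times> UNIV) = N"
  proof
    show "g ` ((UNIV - {0}) \<times> UNIV) \<subseteq> N"
      using x0 by (auto simp: g_def N_def mk_u algebra_simps)
  next
    show "N \<subseteq> g ` ((UNIV - {0}) \<times> UNIV)"
    proof
      fix y assume y: "y \<in> N"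
      then have yu: "y \<in> upper_tri" and y0: "tt y \<noteq> 0 \<or> bb y \<noteq> 0"
        and yr: "tt x * bb y = tt y * bb x" by (auto simp: N_def)
      obtain l where l: "l \<noteq> 0" "tt y = l * tt x" "bb y = l * bb x"
      proof (cases "tt x = 0")
        case True
        then have "bb x \<noteq> 0" using x0 by simp
        then have "tt y = 0" using yr True by simp
        then show ?thesis using that[of "bb y / bb x"] \<open>bb x \<noteq> 0\<close> \<open>tt x = 0\<close> y0 by auto
      next
        case False
        have "tt y \<noteq> 0" using yr y0 False by auto
        moreover have "bb y = tt y / tt x * bb x" using yr False by (simp add: field_simps)
        ultimately show ?thesis using that[of "tt y / tt x"] False by simp
      qed
      have "y = g (l, y$1$1)"
        using yu l unfolding g_def by (simp add: mat_eq upper_tri_def tt_def bb_def algebra_simps)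
      then show "y \<in> g ` ((UNIV - {0}) \<times> UNIV)" using l by blast
    qed
  qed
  have cN: "card N = (q - 1) * q"
    using card_image[OF inj] img q by (simp add: card_cartesian_product card_Diff_singleton)
  have xN: "x \<in> N" using xu x0 by (simp add: N_def mult.commute)
  have "finite N" by simp
  then have "card (N - {x}) = (q - 1) * q - 1" using xN cN by (simp add: card_Diff_singleton)
  also have "\<dots> = q^2 - q - 1" by (simp add: power2_eq_square diff_mult_distrib)
  finally show ?thesis using eq by simp
qed

theorem corollary4p7:
  fixes q :: nat
  assumes "CARD('a::{field,finite}) = q"
  shows "regular_graph (ng_vertices :: 'a mat2 set) ng_adj (q^2 - q - 1)"
  using nbhd_card[OF assms] by (simp add: regular_graph_def)

end
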